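(* Let $X$ be a real-valued random variable with $E(|X|)<\infty$, let $(X_i)_{i\ge1}$ be IID with the law of $X$, let $N$ be a random variable with values in $\{1,2,3,\dots\}$ independent of $(X_i)$, and put $S_N=\sum_{k=1}^N X_k$. If $\mathbb{I}(X)\le \mathbb{I}(N)$, then $\mathbb{I}(S_N)=\mathbb{I}(X)$. (No assumption on the sign of $E(X)$ is made.)
   Context: For a real random variable $Y$, the moment index is $\mathbb{I}(Y):=\sup\{s\ge 0: E((Y^+)^s)<\infty\}\in[0,\infty]$, where $y^+=\max(0,y)$. *)

theory Defs
  imports "HOL-Probability.Probability"
begin

text \<open>For s = 0 the integrand is irrelevant: 0 always belongs to the set anyway on a probability space.\<close>
definition moment_index :: "'a measure \<Rightarrow> ('a \<Rightarrow> real) \<Rightarrow> ereal" where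
  "moment_index M Y =
     Sup (ereal ` {s::real. 0 \<le> s \<and>
        (\<integral>\<^sup>+ x. ennreal ((max 0 (Y x)) powr s) \<partial>M) < \<infinity>})"

end

theory Submission
  imports Defs
begin

lemma one_plus_powr_le:
  fixes y t :: real assumes "0 \<le> y" "1 \<le> t"
  shows "(1 + y) powr t \<le> 2 powr t * (1 + y powr t)"
proof (cases "y \<le> 1")
  case True
  have "(1 + y) powr t \<le> 2 powr t" using assms True by (intro powr_mono2) auto
  also have "\<dots> \<le> 2 powr t * (1 + y powr t)" by simp
  finally show ?thesis .
next
  case False
  have "(1 + y) powr t \<le> (2 * y) powr t" using assms False by (intro powr_mono2) auto
  also have "\<dots> = 2 powr t * y powr t" using assms by (simp add: powr_mult)
  also have "\<dots> \<le> 2 powr t * (1 + y powr t)" by simp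
  finally show ?thesis .
qed

lemma powmean_bound:
  fixes y :: "nat \<Rightarrow> real" and n :: nat and s t :: real
  assumes n: "n \<ge> 1" and y: "\<And>k. y k \<ge> 0" and s: "0 \<le> s" "s \<le> t" and t: "1 \<le> t"
  shows "(\<Sum>k=1..n. y k) powr s \<le> 2 powr t * (real n powr s + real n powr (s-1) * (\<Sum>k=1..n. y k powr t))"
proof -
  define a where "a = (\<Sum>k=1..n. y k) / n"
  have npos: "real n > 0" using n by simp
  have a0: "a \<ge> 0" unfolding a_def by (intro divide_nonneg_nonneg sum_nonneg) (auto simp: y)
  have sum_eq: "(\<Sum>k=1..n. y k) = real n * a" unfolding a_def using npos by simp
  have "(\<Sum>k=1..n. y k) powr s = real n powr s * a powr s"
    unfolding sum_eq using a0 by (simp add: powr_mult)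
  have "a powr s \<le> (1 + a) powr s" using a0 s by (intro powr_mono2) auto
  also have "\<dots> \<le> (1 + a) powr t" using a0 s by (intro powr_mono) auto
  also have "1 + a = (\<Sum>k\<in>{1..n}. (1 / real n) *\<^sub>R (1 + y k))"
    using npos by (simp add: a_def sum.distrib sum_divide_distrib[symmetric] add_divide_distrib)
  also have "(\<Sum>k\<in>{1..n}. (1 / real n) *\<^sub>R (1 + y k)) powr t \<le> (\<Sum>k\<in>{1..n}. (1 / real n) * ((1 + y k) powr t))"
    using n y by (intro convex_on_sum[OF _ _ powr_convex[OF t]]) (auto simp: add_pos_nonneg)
  also have "\<dots> \<le> (\<Sum>k\<in>{1..n}. (1 / real n) * (2 powr t * (1 + y k powr t)))"
    using y t by (intro sum_mono mult_left_mono one_plus_powr_le) auto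
  also have "\<dots> = 2 powr t * (1 + (\<Sum>k=1..n. y k powr t) / real n)"
  proof -
    have "(\<Sum>k\<in>{1..n}. (1 / real n) * (2 powr t * (1 + y k powr t))) = (2 powr t / real n) * (\<Sum>k\<in>{1..n}. (1 + y k powr t))"
      by (simp add: sum_distrib_left)
    also have "(\<Sum>k\<in>{1..n}. (1 + y k powr t)) = real n + (\<Sum>k=1..n. y k powr t)"
      by (simp add: sum.distrib)
    finally show ?thesis using npos by (simp add: field_simps)
  qed
  finally have *: "a powr s \<le> 2 powr t * (1 + (\<Sum>k=1..n. y k powr t) / real n)" .
  have "(\<Sum>k=1..n. y k) powr s \<le> real n powr s * (2 powr t * (1 + (\<Sum>k=1..n. y k powr t) / real n))"
    using \<open>(\<Sum>k=1..n. y k) powr s = _\<close> * by (simp add: mult_left_mono)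
  also have "\<dots> = 2 powr t * (real n powr s + real n powr s / real n * (\<Sum>k=1..n. y k powr t))"
    by (simp add: field_simps)
  also have "real n powr s / real n = real n powr (s - 1)"
    using npos by (simp add: powr_diff)
  finally show ?thesis .
qed

lemma powr_le_one_plus:
  fixes y s s' :: real assumes "0 \<le> y" "0 \<le> s" "s \<le> s'"
  shows "y powr s \<le> 1 + y powr s'"
proof (cases "y \<le> 1")
  case True
  then have "y powr s \<le> 1 powr s" using assms by (intro powr_mono2) auto
  then have "y powr s \<le> 1" by simp
  moreover have "0 \<le> y powr s'" by simp
  ultimately show ?thesis by linarith
next
  case False
  then have "y powr s \<le> y powr s'" using assms by (intro powr_mono) auto
  then show ?thesis by simp
qed

lemma fin_zero:
  assumes "prob_space M"
  shows "(\<integral>\<^sup>+ x. ennreal ((max 0 (Y x)) powr 0) \<partial>M) < \<infinity>"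
proof -
  have "(\<integral>\<^sup>+ x. ennreal ((max 0 (Y x)) powr 0) \<partial>M) \<le> (\<integral>\<^sup>+ x. 1 \<partial>M)"
    by (intro nn_integral_mono) (auto simp: powr_def)
  also have "\<dots> = 1" using assms by (simp add: prob_space.emeasure_space_1)
  finally show ?thesis by (simp add: order_le_less_trans)
qed

lemma fin_mono:
  assumes "prob_space M" and [measurable]: "Y \<in> borel_measurable M" and "0 \<le> s" "s \<le> s'"
    and fin: "(\<integral>\<^sup>+ x. ennreal ((max 0 (Y x)) powr s') \<partial>M) < \<infinity>"
  shows "(\<integral>\<^sup>+ x. ennreal ((max 0 (Y x)) powr s) \<partial>M) < \<infinity>"
proof -
  have "(\<integral>\<^sup>+ x. ennreal ((max 0 (Y x)) powr s) \<partial>M) \<le> (\<integral>\<^sup>+ x. 1 + ennreal ((max 0 (Y x)) powr s') \<partial>M)"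
  proof (intro nn_integral_mono)
    fix x
    have "max 0 (Y x) powr s \<le> 1 + max 0 (Y x) powr s'" using assms by (intro powr_le_one_plus) auto
    then have "ennreal (max 0 (Y x) powr s) \<le> ennreal (1 + max 0 (Y x) powr s')" by (rule ennreal_leI)
    also have "\<dots> = 1 + ennreal (max 0 (Y x) powr s')" by (simp add: ennreal_plus)
    finally show "ennreal (max 0 (Y x) powr s) \<le> 1 + ennreal (max 0 (Y x) powr s')" .
  qed
  also have "\<dots> = (\<integral>\<^sup>+ x. 1 \<partial>M) + (\<integral>\<^sup>+ x. ennreal ((max 0 (Y x)) powr s') \<partial>M)"
    by (intro nn_integral_add) auto
  also have "\<dots> < \<infinity>" using fin assms by (simp add: prob_space.emeasure_space_1)
  finally show ?thesis .
qed

lemma fin_below: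
  assumes "prob_space M" and [measurable]: "Y \<in> borel_measurable M" and "0 \<le> s"
    and "ereal s < moment_index M Y"
  shows "(\<integral>\<^sup>+ x. ennreal ((max 0 (Y x)) powr s) \<partial>M) < \<infinity>"
proof -
  from assms(4) obtain s' where s': "0 \<le> s'" "(\<integral>\<^sup>+ x. ennreal ((max 0 (Y x)) powr s') \<partial>M) < \<infinity>" "s < s'"
    unfolding moment_index_def less_Sup_iff by auto
  show ?thesis using fin_mono[OF assms(1,2,3) _ s'(2)] s' by simp
qed

lemma ennreal_mult_lt_top_right: "(a::ennreal) \<noteq> 0 \<Longrightarrow> a * b < \<infinity> \<Longrightarrow> b < \<infinity>"
  unfolding infinity_ennreal_def using ennreal_mult_top top.not_eq_extremum by (metis mult.commute)

lemma shift_bound: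
  fixes x C s :: real assumes "0 \<le> C" "0 \<le> s"
  shows "max 0 x powr s \<le> (2*C) powr s + 2 powr s * max 0 (x - C) powr s"
proof (cases "x \<le> 2*C")
  case True
  have "max 0 x powr s \<le> (2*C) powr s" using True assms by (intro powr_mono2) auto
  moreover have "0 \<le> 2 powr s * max 0 (x - C) powr s" by simp
  ultimately show ?thesis by linarith
next
  case False
  have "max 0 x powr s \<le> (2 * max 0 (x - C)) powr s" using False assms by (intro powr_mono2) auto
  also have "\<dots> = 2 powr s * max 0 (x - C) powr s" by (simp add: powr_mult)
  finally have "max 0 x powr s \<le> 2 powr s * max 0 (x - C) powr s" .
  moreover have "0 \<le> (2*C) powr s" by simp
  ultimately show ?thesis by linarith
qed

locale cor_setup = prob_space M for M :: "'a measure" +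
  fixes X :: "'a \<Rightarrow> real" and Xs :: "nat \<Rightarrow> 'a \<Rightarrow> real" and N :: "'a \<Rightarrow> nat"
  assumes Xm[measurable]: "X \<in> borel_measurable M"
    and Xint: "integrable M X"
    and Nm[measurable]: "N \<in> measurable M (count_space UNIV)"
    and N1: "\<And>x. x \<in> space M \<Longrightarrow> N x \<ge> 1"
    and Xsm: "\<And>i. i \<ge> 1 \<Longrightarrow> Xs i \<in> borel_measurable M"
    and Xsd: "\<And>i. i \<ge> 1 \<Longrightarrow> distr M borel (Xs i) = distr M borel X"
    and ind: "indep_vars (\<lambda>_. borel)
           (\<lambda>j x. case j of None \<Rightarrow> real (N x) | Some i \<Rightarrow> Xs i x)
           (insert None (Some ` {1..}))"
begin

lemma indep_prod:
  fixes F :: "real \<Rightarrow> ennreal" and G :: "nat \<Rightarrow> real \<Rightarrow> ennreal"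
  assumes K: "finite K" "K \<subseteq> {1..}" and F[measurable]: "F \<in> borel_measurable borel"
    and G: "\<And>k. k \<in> K \<Longrightarrow> G k \<in> borel_measurable borel"
  shows "(\<integral>\<^sup>+\<omega>. F (real (N \<omega>)) * (\<Prod>k\<in>K. G k (Xs k \<omega>)) \<partial>M)
       = (\<integral>\<^sup>+\<omega>. F (real (N \<omega>)) \<partial>M) * (\<Prod>k\<in>K. \<integral>\<^sup>+\<omega>. G k (Xs k \<omega>) \<partial>M)"
proof -
  define Z where "Z = (\<lambda>j x. case j of None \<Rightarrow> real (N x) | Some i \<Rightarrow> Xs i x)"
  define W where "W = (\<lambda>j. case j of None \<Rightarrow> F | Some k \<Rightarrow> G k)"
  define I where "I = insert None (Some ` K)"
  have "indep_vars (\<lambda>_. borel) Z I"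
    unfolding Z_def I_def by (rule indep_vars_subset[OF ind]) (use K in auto)
  then have ind2: "indep_vars (\<lambda>_. borel) (\<lambda>j \<omega>. W j (Z j \<omega>)) I"
    by (rule indep_vars_compose2) (auto simp: W_def I_def G)
  have fin: "finite I" using K by (simp add: I_def)
  have "(\<integral>\<^sup>+\<omega>. (\<Prod>j\<in>I. W j (Z j \<omega>)) \<partial>M) = (\<Prod>j\<in>I. \<integral>\<^sup>+\<omega>. W j (Z j \<omega>) \<partial>M)"
    by (rule indep_vars_nn_integral[OF fin ind2]) simp
  moreover have "\<And>\<omega>. (\<Prod>j\<in>I. W j (Z j \<omega>)) = F (real (N \<omega>)) * (\<Prod>k\<in>K. G k (Xs k \<omega>))"
    using K by (simp add: I_def prod.reindex W_def Z_def)
  moreover have "(\<Prod>j\<in>I. \<integral>\<^sup>+\<omega>. W j (Z j \<omega>) \<partial>M) = (\<integral>\<^sup>+\<omega>. F (real (N \<omega>)) \<partial>M) * (\<Prod>k\<in>K. \<integral>\<^sup>+\<omega>. G k (Xs k \<omega>) \<partial>M)"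
    using K by (simp add: I_def prod.reindex W_def Z_def)
  ultimately show ?thesis by simp
qed

lemma distr_int:
  assumes k: "k \<ge> 1" and g[measurable]: "g \<in> borel_measurable borel"
  shows "(\<integral>\<^sup>+\<omega>. g (Xs k \<omega>) \<partial>M) = (\<integral>\<^sup>+\<omega>. g (X \<omega>) \<partial>M)"
proof -
  have [measurable]: "Xs k \<in> borel_measurable M" using Xsm k .
  have "(\<integral>\<^sup>+\<omega>. g (Xs k \<omega>) \<partial>M) = integral\<^sup>N (distr M borel (Xs k)) g"
    by (simp add: nn_integral_distr)
  also have "\<dots> = integral\<^sup>N (distr M borel X) g" using Xsd[OF k] by simp
  also have "\<dots> = (\<integral>\<^sup>+\<omega>. g (X \<omega>) \<partial>M)" by (simp add: nn_integral_distr)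
  finally show ?thesis .
qed

definition "S = (\<lambda>x. \<Sum>k=1..N x. Xs k x)"

lemma Sm[measurable]: "S \<in> borel_measurable M"
  unfolding S_def
proof (rule measurable_compose_countable'[where I=UNIV and g=N])
  fix n :: nat
  show "(\<lambda>x. \<Sum>k=1..n. Xs k x) \<in> borel_measurable M"
    by (intro borel_measurable_sum) (auto intro: Xsm)
qed (auto simp: Nm)

lemma exists_N_pos: "\<exists>n. emeasure M {x\<in>space M. N x = n} \<noteq> 0"
proof (rule ccontr)
  assume "\<not> ?thesis"
  then have "emeasure M (\<Union>n. {x\<in>space M. N x = n}) = 0"
    by (intro emeasure_UN_eq_0) auto
  moreover have "(\<Union>n. {x\<in>space M. N x = n}) = space M" by auto
  ultimately show False by (simp add: emeasure_space_1)
qed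

lemma exists_c_pos: "\<exists>c::nat. emeasure M {x\<in>space M. - real c \<le> X x} \<noteq> 0"
proof (rule ccontr)
  assume "\<not> ?thesis"
  then have "emeasure M (\<Union>c. {x\<in>space M. - real c \<le> X x}) = 0"
    by (intro emeasure_UN_eq_0) auto
  moreover have "(\<Union>c. {x\<in>space M. - real c \<le> X x}) = space M"
  proof -
    have "\<exists>c. - real c \<le> X x" for x using real_arch_simple[of "- X x"] by (metis minus_le_iff)
    then show ?thesis by auto
  qed
  ultimately show False by (simp add: emeasure_space_1)
qed

lemma upper:
  assumes s: "0 \<le> s" and fin: "(\<integral>\<^sup>+x. ennreal (max 0 (S x) powr s) \<partial>M) < \<infinity>"
  shows "(\<integral>\<^sup>+x. ennreal (max 0 (X x) powr s) \<partial>M) < \<infinity>"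
proof -
  obtain n where n: "emeasure M {x\<in>space M. N x = n} \<noteq> 0" using exists_N_pos by blast
  have n1: "n \<ge> 1"
  proof (rule ccontr)
    assume "\<not> n \<ge> 1"
    then have "{x\<in>space M. N x = n} = {}" using N1 by force
    with n show False by simp
  qed
  obtain c :: nat where c: "emeasure M {x\<in>space M. - real c \<le> X x} \<noteq> 0" using exists_c_pos by blast
  define C where "C = real n * real c"
  have C0: "0 \<le> C" by (simp add: C_def)
  define F :: "real \<Rightarrow> ennreal" where "F = indicator {real n}"
  define g1 :: "real \<Rightarrow> ennreal" where "g1 = (\<lambda>x. ennreal (max 0 (x - C) powr s))"
  define g2 :: "real \<Rightarrow> ennreal" where "g2 = indicator {- real c..}"
  define G where "G = (\<lambda>k::nat. if k = 1 then g1 else g2)"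
  have [measurable]: "F \<in> borel_measurable borel" "g1 \<in> borel_measurable borel" "g2 \<in> borel_measurable borel"
    by (auto simp: F_def g1_def g2_def)
  have Gm: "G k \<in> borel_measurable borel" for k by (simp add: G_def)
  have pw: "F (real (N \<omega>)) * (\<Prod>k\<in>{1..n}. G k (Xs k \<omega>)) \<le> ennreal (max 0 (S \<omega>) powr s)"
    if \<omega>: "\<omega> \<in> space M" for \<omega>
  proof (cases "N \<omega> = n")
    case False then show ?thesis by (simp add: F_def)
  next
    case Nn: True
    show ?thesis
    proof (cases "\<exists>k\<in>{2..n}. Xs k \<omega> < - real c")
      case True
      then obtain k where k: "k \<in> {2..n}" "Xs k \<omega> < - real c" by blast
      then have "G k (Xs k \<omega>) = 0" by (simp add: G_def g2_def)
      moreover have "k \<in> {1..n}" using k by auto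
      ultimately have P0: "(\<Prod>k\<in>{1..n}. G k (Xs k \<omega>)) = 0" by (metis finite_atLeastAtMost prod_zero)
      show ?thesis by (metis P0 mult_zero_right zero_le)
    next
      case False
      have split: "{1..n} = insert 1 {2..n}" using n1 by auto
      have "(\<Prod>k\<in>{1..n}. G k (Xs k \<omega>)) = g1 (Xs 1 \<omega>)"
        using False unfolding split by (simp add: G_def g2_def not_less)
      moreover have "Xs 1 \<omega> - C \<le> S \<omega>"
      proof -
        have "S \<omega> = Xs 1 \<omega> + (\<Sum>k=2..n. Xs k \<omega>)" unfolding S_def Nn split by simp
        moreover have "(\<Sum>k=2..n. Xs k \<omega>) \<ge> (\<Sum>k=2..n. - real c)"
          using False by (intro sum_mono) (auto simp: not_less)
        moreover have "(\<Sum>k=2..n. - real c) \<ge> - C"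
          unfolding C_def using n1 by (simp add: of_nat_diff mult_right_mono)
        ultimately show ?thesis by linarith
      qed
      then have "g1 (Xs 1 \<omega>) \<le> ennreal (max 0 (S \<omega>) powr s)"
        unfolding g1_def using s by (intro ennreal_leI powr_mono2) auto
      ultimately show ?thesis using Nn by (simp add: F_def)
    qed
  qed
  have "(\<integral>\<^sup>+\<omega>. F (real (N \<omega>)) * (\<Prod>k\<in>{1..n}. G k (Xs k \<omega>)) \<partial>M)
       = (\<integral>\<^sup>+\<omega>. F (real (N \<omega>)) \<partial>M) * (\<Prod>k\<in>{1..n}. \<integral>\<^sup>+\<omega>. G k (Xs k \<omega>) \<partial>M)"
    by (rule indep_prod) (auto simp: Gm)
  also have "(\<integral>\<^sup>+\<omega>. F (real (N \<omega>)) \<partial>M) = emeasure M {x\<in>space M. N x = n}"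
  proof -
    have "(\<integral>\<^sup>+\<omega>. F (real (N \<omega>)) \<partial>M) = (\<integral>\<^sup>+\<omega>. indicator {x\<in>space M. N x = n} \<omega> \<partial>M)"
      by (intro nn_integral_cong) (auto simp: F_def indicator_def)
    then show ?thesis by simp
  qed
  also have "(\<Prod>k\<in>{1..n}. \<integral>\<^sup>+\<omega>. G k (Xs k \<omega>) \<partial>M)
     = (\<integral>\<^sup>+\<omega>. g1 (X \<omega>) \<partial>M) * emeasure M {x\<in>space M. - real c \<le> X x} ^ (n - 1)"
  proof -
    have split: "{1..n} = insert 1 {2..n}" using n1 by auto
    have "(\<Prod>k\<in>{1..n}. \<integral>\<^sup>+\<omega>. G k (Xs k \<omega>) \<partial>M) = (\<integral>\<^sup>+\<omega>. g1 (Xs 1 \<omega>) \<partial>M) * (\<Prod>k\<in>{2..n}. \<integral>\<^sup>+\<omega>. g2 (Xs k \<omega>) \<partial>M)"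
      unfolding split by (simp add: G_def)
    also have "(\<integral>\<^sup>+\<omega>. g1 (Xs 1 \<omega>) \<partial>M) = (\<integral>\<^sup>+\<omega>. g1 (X \<omega>) \<partial>M)" by (rule distr_int) auto
    also have "(\<Prod>k\<in>{2..n}. \<integral>\<^sup>+\<omega>. g2 (Xs k \<omega>) \<partial>M) = (\<Prod>k\<in>{2..n}. emeasure M {x\<in>space M. - real c \<le> X x})"
    proof (intro prod.cong refl)
      fix k assume "k \<in> {2..n}"
      then have "(\<integral>\<^sup>+\<omega>. g2 (Xs k \<omega>) \<partial>M) = (\<integral>\<^sup>+\<omega>. g2 (X \<omega>) \<partial>M)" by (intro distr_int) auto
      also have "\<dots> = (\<integral>\<^sup>+\<omega>. indicator {x\<in>space M. - real c \<le> X x} \<omega> \<partial>M)"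
        by (intro nn_integral_cong) (auto simp: g2_def indicator_def)
      finally show "(\<integral>\<^sup>+\<omega>. g2 (Xs k \<omega>) \<partial>M) = emeasure M {x\<in>space M. - real c \<le> X x}" by simp
    qed
    finally show ?thesis by simp
  qed
  finally have eq: "(\<integral>\<^sup>+\<omega>. F (real (N \<omega>)) * (\<Prod>k\<in>{1..n}. G k (Xs k \<omega>)) \<partial>M)
     = emeasure M {x\<in>space M. N x = n} * ((\<integral>\<^sup>+\<omega>. g1 (X \<omega>) \<partial>M) * emeasure M {x\<in>space M. - real c \<le> X x} ^ (n - 1))" .
  have "(\<integral>\<^sup>+\<omega>. F (real (N \<omega>)) * (\<Prod>k\<in>{1..n}. G k (Xs k \<omega>)) \<partial>M) \<le> (\<integral>\<^sup>+x. ennreal (max 0 (S x) powr s) \<partial>M)"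
    using pw by (intro nn_integral_mono) auto
  with fin eq have "emeasure M {x\<in>space M. N x = n} * ((\<integral>\<^sup>+\<omega>. g1 (X \<omega>) \<partial>M) * emeasure M {x\<in>space M. - real c \<le> X x} ^ (n - 1)) < \<infinity>"
    by simp
  then have "(\<integral>\<^sup>+\<omega>. g1 (X \<omega>) \<partial>M) * emeasure M {x\<in>space M. - real c \<le> X x} ^ (n - 1) < \<infinity>"
    by (rule ennreal_mult_lt_top_right[OF n])
  then have "emeasure M {x\<in>space M. - real c \<le> X x} ^ (n - 1) * (\<integral>\<^sup>+\<omega>. g1 (X \<omega>) \<partial>M) < \<infinity>"
    by (simp add: mult.commute)
  moreover have Q: "emeasure M {x\<in>space M. - real c \<le> X x} ^ (n - 1) \<noteq> 0" using c by simp
  ultimately have fin1: "(\<integral>\<^sup>+\<omega>. g1 (X \<omega>) \<partial>M) < \<infinity>"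
    using ennreal_mult_lt_top_right[OF Q] by blast
  have "(\<integral>\<^sup>+x. ennreal (max 0 (X x) powr s) \<partial>M) \<le> (\<integral>\<^sup>+x. ennreal ((2*C) powr s) + ennreal (2 powr s) * g1 (X x) \<partial>M)"
  proof (intro nn_integral_mono)
    fix x
    have "max 0 (X x) powr s \<le> (2*C) powr s + 2 powr s * max 0 (X x - C) powr s"
      using C0 s by (rule shift_bound)
    then have "ennreal (max 0 (X x) powr s) \<le> ennreal ((2*C) powr s + 2 powr s * max 0 (X x - C) powr s)"
      by (rule ennreal_leI)
    also have "\<dots> = ennreal ((2*C) powr s) + ennreal (2 powr s) * g1 (X x)"
      by (simp add: g1_def ennreal_mult ennreal_plus)
    finally show "ennreal (max 0 (X x) powr s) \<le> ennreal ((2*C) powr s) + ennreal (2 powr s) * g1 (X x)" .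
  qed
  also have "\<dots> = (\<integral>\<^sup>+x. ennreal ((2*C) powr s) \<partial>M) + ennreal (2 powr s) * (\<integral>\<^sup>+x. g1 (X x) \<partial>M)"
    by (subst nn_integral_add) (auto simp: nn_integral_cmult)
  also have "\<dots> < \<infinity>" using fin1 by (simp add: emeasure_space_1 ennreal_mult_less_top)
  finally show ?thesis .
qed

lemma lower:
  assumes s: "0 \<le> s" and fX: "ereal s < moment_index M X"
    and fN: "ereal s < moment_index M (\<lambda>x. real (N x))"
  shows "(\<integral>\<^sup>+x. ennreal (max 0 (S x) powr s) \<partial>M) < \<infinity>"
proof -
  define t where "t = max s 1"
  have t: "s \<le> t" "1 \<le> t" by (auto simp: t_def)
  have finN: "(\<integral>\<^sup>+x. ennreal (real (N x) powr s) \<partial>M) < \<infinity>"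
    using fin_below[OF prob_space_axioms _ s fN] by simp
  have finXt: "(\<integral>\<^sup>+x. ennreal (max 0 (X x) powr t) \<partial>M) < \<infinity>"
  proof (cases "1 \<le> s")
    case True
    then have "t = s" by (simp add: t_def)
    then show ?thesis using fin_below[OF prob_space_axioms Xm s fX] by simp
  next
    case False
    then have "t = 1" by (simp add: t_def)
    have "(\<integral>\<^sup>+x. ennreal (max 0 (X x) powr t) \<partial>M) \<le> (\<integral>\<^sup>+x. ennreal (norm (X x)) \<partial>M)"
      unfolding \<open>t = 1\<close> by (intro nn_integral_mono ennreal_leI) (auto simp: powr_one)
    also have "\<dots> < \<infinity>" using Xint by (simp add: integrable_iff_bounded)
    finally show ?thesis .
  qed
  define F :: "nat \<Rightarrow> real \<Rightarrow> ennreal"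
    where "F = (\<lambda>k r. ennreal (r powr (s - 1) * (if real (Suc k) \<le> r then 1 else 0)))"
  define g :: "real \<Rightarrow> ennreal" where "g = (\<lambda>x. ennreal (max 0 x powr t))"
  have Fm[measurable]: "F k \<in> borel_measurable borel" for k unfolding F_def by measurable
  have gm[measurable]: "g \<in> borel_measurable borel" unfolding g_def by measurable
  have sumF: "(\<Sum>k. F k (real n) * g (Xs (Suc k) \<omega>)) = ennreal (real n powr (s - 1) * (\<Sum>k=1..n. max 0 (Xs k \<omega>) powr t))"
    for n \<omega>
  proof -
    have "(\<Sum>k. F k (real n) * g (Xs (Suc k) \<omega>)) = (\<Sum>k<n. F k (real n) * g (Xs (Suc k) \<omega>))"
      by (rule suminf_finite) (auto simp: F_def)
    also have "\<dots> = (\<Sum>k<n. ennreal (real n powr (s - 1) * max 0 (Xs (Suc k) \<omega>) powr t))"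
      by (intro sum.cong refl) (auto simp: F_def g_def ennreal_mult[symmetric])
    also have "\<dots> = ennreal (\<Sum>k<n. real n powr (s - 1) * max 0 (Xs (Suc k) \<omega>) powr t)"
      by (rule sum_ennreal) simp
    also have "(\<Sum>k<n. real n powr (s - 1) * max 0 (Xs (Suc k) \<omega>) powr t) = real n powr (s - 1) * (\<Sum>k=1..n. max 0 (Xs k \<omega>) powr t)"
      by (simp add: sum.atLeast1_atMost_eq sum_distrib_left)
    finally show ?thesis .
  qed
  have sumF1: "(\<Sum>k. F k (real n)) = ennreal (real n powr s)" if "n \<ge> 1" for n
  proof -
    have "(\<Sum>k. F k (real n)) = (\<Sum>k<n. F k (real n))"
      by (rule suminf_finite) (auto simp: F_def)
    also have "\<dots> = (\<Sum>k<n. ennreal (real n powr (s - 1)))"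
      by (intro sum.cong refl) (auto simp: F_def)
    also have "\<dots> = ennreal (real n * real n powr (s - 1))" by (simp add: ennreal_mult' ennreal_of_nat_eq_real_of_nat)
    also have "real n * real n powr (s - 1) = real n powr s"
      using that by (simp add: powr_diff)
    finally show ?thesis .
  qed
  have pw: "ennreal (max 0 (S \<omega>) powr s) \<le> ennreal (2 powr t) * (ennreal (real (N \<omega>) powr s) + (\<Sum>k. F k (real (N \<omega>)) * g (Xs (Suc k) \<omega>)))"
    if \<omega>: "\<omega> \<in> space M" for \<omega>
  proof -
    define n where "n = N \<omega>"
    have n1: "n \<ge> 1" using N1 \<omega> by (simp add: n_def)
    have "max 0 (S \<omega>) \<le> (\<Sum>k=1..n. max 0 (Xs k \<omega>))"
      unfolding S_def n_def by (intro max.boundedI sum_nonneg sum_mono) auto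
    then have "max 0 (S \<omega>) powr s \<le> (\<Sum>k=1..n. max 0 (Xs k \<omega>)) powr s"
      using s by (intro powr_mono2) auto
    also have "\<dots> \<le> 2 powr t * (real n powr s + real n powr (s-1) * (\<Sum>k=1..n. max 0 (Xs k \<omega>) powr t))"
      using n1 s t by (intro powmean_bound) auto
    finally have "ennreal (max 0 (S \<omega>) powr s) \<le> ennreal (2 powr t * (real n powr s + real n powr (s-1) * (\<Sum>k=1..n. max 0 (Xs k \<omega>) powr t)))"
      by (rule ennreal_leI)
    also have "\<dots> = ennreal (2 powr t) * (ennreal (real n powr s) + ennreal (real n powr (s-1) * (\<Sum>k=1..n. max 0 (Xs k \<omega>) powr t)))"
      by (simp add: ennreal_mult ennreal_plus sum_nonneg)
    finally show ?thesis unfolding n_def sumF .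
  qed
  have "(\<integral>\<^sup>+x. ennreal (max 0 (S x) powr s) \<partial>M) \<le> (\<integral>\<^sup>+\<omega>. ennreal (2 powr t) * (ennreal (real (N \<omega>) powr s) + (\<Sum>k. F k (real (N \<omega>)) * g (Xs (Suc k) \<omega>))) \<partial>M)"
    using pw by (intro nn_integral_mono) auto
  also have "\<dots> = ennreal (2 powr t) * ((\<integral>\<^sup>+\<omega>. ennreal (real (N \<omega>) powr s) \<partial>M) + (\<Sum>k. \<integral>\<^sup>+\<omega>. F k (real (N \<omega>)) * g (Xs (Suc k) \<omega>) \<partial>M))"
  proof -
    have [measurable]: "Xs (Suc k) \<in> borel_measurable M" for k using Xsm by simp
    show ?thesis by (simp add: nn_integral_cmult nn_integral_add nn_integral_suminf)
  qed
  also have "(\<Sum>k. \<integral>\<^sup>+\<omega>. F k (real (N \<omega>)) * g (Xs (Suc k) \<omega>) \<partial>M)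
      = (\<Sum>k. (\<integral>\<^sup>+\<omega>. F k (real (N \<omega>)) \<partial>M) * (\<integral>\<^sup>+\<omega>. g (X \<omega>) \<partial>M))"
  proof (intro suminf_cong)
    fix k
    have "(\<integral>\<^sup>+\<omega>. F k (real (N \<omega>)) * (\<Prod>j\<in>{Suc k}. g (Xs j \<omega>)) \<partial>M)
       = (\<integral>\<^sup>+\<omega>. F k (real (N \<omega>)) \<partial>M) * (\<Prod>j\<in>{Suc k}. \<integral>\<^sup>+\<omega>. g (Xs j \<omega>) \<partial>M)"
      by (rule indep_prod) auto
    moreover have "(\<integral>\<^sup>+\<omega>. g (Xs (Suc k) \<omega>) \<partial>M) = (\<integral>\<^sup>+\<omega>. g (X \<omega>) \<partial>M)" by (rule distr_int) auto
    ultimately show "(\<integral>\<^sup>+\<omega>. F k (real (N \<omega>)) * g (Xs (Suc k) \<omega>) \<partial>M) = (\<integral>\<^sup>+\<omega>. F k (real (N \<omega>)) \<partial>M) * (\<integral>\<^sup>+\<omega>. g (X \<omega>) \<partial>M)"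
      by simp
  qed
  also have "\<dots> = (\<Sum>k. \<integral>\<^sup>+\<omega>. F k (real (N \<omega>)) \<partial>M) * (\<integral>\<^sup>+\<omega>. g (X \<omega>) \<partial>M)"
    by simp
  also have "(\<Sum>k. \<integral>\<^sup>+\<omega>. F k (real (N \<omega>)) \<partial>M) = (\<integral>\<^sup>+\<omega>. (\<Sum>k. F k (real (N \<omega>))) \<partial>M)"
    by (rule nn_integral_suminf[symmetric]) auto
  also have "\<dots> = (\<integral>\<^sup>+\<omega>. ennreal (real (N \<omega>) powr s) \<partial>M)"
    by (intro nn_integral_cong sumF1) (metis N1 One_nat_def)
  finally have le: "(\<integral>\<^sup>+x. ennreal (max 0 (S x) powr s) \<partial>M) \<le> ennreal (2 powr t) * ((\<integral>\<^sup>+\<omega>. ennreal (real (N \<omega>) powr s) \<partial>M) + (\<integral>\<^sup>+\<omega>. ennreal (real (N \<omega>) powr s) \<partial>M) * (\<integral>\<^sup>+\<omega>. g (X \<omega>) \<partial>M))" .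
  have "ennreal (2 powr t) * ((\<integral>\<^sup>+\<omega>. ennreal (real (N \<omega>) powr s) \<partial>M) + (\<integral>\<^sup>+\<omega>. ennreal (real (N \<omega>) powr s) \<partial>M) * (\<integral>\<^sup>+\<omega>. g (X \<omega>) \<partial>M)) < \<infinity>"
    using finN finXt by (simp add: g_def ennreal_mult_less_top)
  with le show ?thesis by (rule order_le_less_trans)
qed

end


theorem corollary2p3:
  fixes M :: "'a measure" and X :: "'a \<Rightarrow> real" and Xs :: "nat \<Rightarrow> 'a \<Rightarrow> real"
    and N :: "'a \<Rightarrow> nat"
  assumes "prob_space M"
    and "X \<in> borel_measurable M"
    and "integrable M X"
    and "N \<in> measurable M (count_space UNIV)"
    and "\<And>x. x \<in> space M \<Longrightarrow> N x \<ge> 1"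
    and "\<And>i. i \<ge> 1 \<Longrightarrow> Xs i \<in> borel_measurable M"
    and "\<And>i. i \<ge> 1 \<Longrightarrow> distr M borel (Xs i) = distr M borel X"
    and "prob_space.indep_vars M (\<lambda>_. borel)
           (\<lambda>j x. case j of None \<Rightarrow> real (N x) | Some i \<Rightarrow> Xs i x)
           (insert None (Some ` {1..}))"
    and "moment_index M X \<le> moment_index M (\<lambda>x. real (N x))"
  shows "moment_index M (\<lambda>x. \<Sum>k=1..N x. Xs k x) = moment_index M X"
proof -
  interpret C: cor_setup M X Xs N
    using assms by (simp add: cor_setup_def cor_setup_axioms_def)
  have Seq: "(\<lambda>x. \<Sum>k=1..N x. Xs k x) = C.S" by (simp add: C.S_def)
  have up: "moment_index M C.S \<le> moment_index M X"
    unfolding moment_index_def by (rule Sup_subset_mono) (auto intro: C.upper[simplified])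
  have lo: "moment_index M X \<le> moment_index M C.S"
  proof (rule ccontr)
    assume "\<not> ?thesis"
    then have "moment_index M C.S < moment_index M X" by simp
    then obtain r where r: "moment_index M C.S < ereal r" "ereal r < moment_index M X"
      using ereal_dense2 by blast
    have "ereal 0 \<le> moment_index M C.S"
      unfolding moment_index_def by (rule Sup_upper) (use fin_zero[OF assms(1)] in auto)
    then have "ereal 0 < ereal r" using r(1) by (rule order_le_less_trans)
    then have r0: "0 \<le> r" by simp
    have "(\<integral>\<^sup>+x. ennreal (max 0 (C.S x) powr r) \<partial>M) < \<infinity>"
      using C.lower[OF r0 r(2)] r(2) assms(9) by simp
    then have "ereal r \<le> moment_index M C.S"
      unfolding moment_index_def using r0 by (intro Sup_upper) auto
    with r show False by simp
  qed
  show ?thesis unfolding Seq using up lo by simp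
qed

end
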